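(* Let $i\in\{1,\dots,n\}$, let $F_i$ be the $i$th coordinate face of $\mathbf P$ and let $\eta_i$ be the least element (with respect to $\le$) of the set $P_i$ of weights in $F_i$. Then $F_i$ is a facet of $\mathbf P$ if and only if $(\eta_i,\tilde\omega_j)\ne m_j$ for all $j\ne i$.
   Context: Let $\mathfrak g$ be a finite-dimensional complex simple Lie algebra with root system $\Phi$, base $\Pi=\{\alpha_1,\dots,\alpha_n\}$, Weyl group $W$; $E$ is the real span of $\Pi$ with $W$-invariant inner product $(\cdot,\cdot)$. Let $\omega_i$ be the fundamental weights and $\tilde\omega_i=2\omega_i/(\alpha_i,\alpha_i)$, so $(\tilde\omega_i,\alpha_j)=\delta_{ij}$; thus $(x,\tilde\omega_i)$ is the coefficient of $\alpha_i$ in $x\in E$. Fix a dominant integral weight $\lambda=\sum_i m_i\alpha_i$, and let $P(\lambda)$ be the set of weights of the irreducible module of highest weight $\lambda$. Weight polytope $\mathbf P=\mathrm{conv}(W\lambda)$. $P_i=\{\mu\in P(\lambda)\mid(\mu,\tilde\omega_i)=m_i\}$ and the $i$th coordinate face is $F_i=\mathrm{conv}(P_i)$ (which has a least element in the order $\mu\le\nu$ iff $\nu-\mu$ is a nonnegative integer combination of simple roots). A facet here means a face of dimension $n-1$. *)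

theory Defs
  imports "HOL-Analysis.Analysis"
begin

text \<open>Abstract (reduced, crystallographic) root systems in a Euclidean space 'a,
  which plays the role of E; the inner product of 'a is the W-invariant inner product.\<close>

definition rs_refl :: "'a::euclidean_space \<Rightarrow> 'a \<Rightarrow> 'a" where
  "rs_refl \<alpha> x = x - (2 * inner x \<alpha> / inner \<alpha> \<alpha>) *\<^sub>R \<alpha>"

definition root_system :: "'a::euclidean_space set \<Rightarrow> bool" where
  "root_system \<Phi> \<longleftrightarrow> finite \<Phi> \<and> 0 \<notin> \<Phi> \<and> span \<Phi> = UNIV
     \<and> (\<forall>\<alpha>\<in>\<Phi>. \<forall>\<beta>\<in>\<Phi>. rs_refl \<alpha> \<beta> \<in> \<Phi>)
     \<and> (\<forall>\<alpha>\<in>\<Phi>. \<forall>\<beta>\<in>\<Phi>. 2 * inner \<beta> \<alpha> / inner \<alpha> \<alpha> \<in> \<int>)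
     \<and> (\<forall>\<alpha>\<in>\<Phi>. \<forall>c::real. c *\<^sub>R \<alpha> \<in> \<Phi> \<longrightarrow> c = 1 \<or> c = -1)"

definition irreducible_rs :: "'a::euclidean_space set \<Rightarrow> bool" where
  "irreducible_rs \<Phi> \<longleftrightarrow> \<not> (\<exists>A B. A \<noteq> {} \<and> B \<noteq> {} \<and> A \<union> B = \<Phi> \<and> A \<inter> B = {}
       \<and> (\<forall>a\<in>A. \<forall>b\<in>B. inner a b = 0))"

definition is_base :: "'a::euclidean_space set \<Rightarrow> ('i::finite \<Rightarrow> 'a) \<Rightarrow> bool" where
  "is_base \<Phi> alpha \<longleftrightarrow> inj alpha \<and> range alpha \<subseteq> \<Phi>
     \<and> independent (range alpha) \<and> span (range alpha) = UNIV
     \<and> (\<forall>\<beta>\<in>\<Phi>. \<exists>c::'i \<Rightarrow> int. \<beta> = (\<Sum>i\<in>UNIV. of_int (c i) *\<^sub>R alpha i)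
            \<and> ((\<forall>i. c i \<ge> 0) \<or> (\<forall>i. c i \<le> 0)))"

inductive_set weyl_group :: "'a::euclidean_space set \<Rightarrow> ('a \<Rightarrow> 'a) set" for \<Phi> where
  weyl_id: "id \<in> weyl_group \<Phi>"
| weyl_step: "w \<in> weyl_group \<Phi> \<Longrightarrow> \<alpha> \<in> \<Phi> \<Longrightarrow> rs_refl \<alpha> \<circ> w \<in> weyl_group \<Phi>"

text \<open>Fundamental weights omega_i: (omega_i, alpha_j^vee) = delta_ij, and
  omega-tilde_i = 2 omega_i / (alpha_i, alpha_i).\<close>
definition fund_weight :: "('i::finite \<Rightarrow> 'a::euclidean_space) \<Rightarrow> 'i \<Rightarrow> 'a" where
  "fund_weight alpha i = (THE v. \<forall>j. 2 * inner v (alpha j) / inner (alpha j) (alpha j)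
                                      = (if j = i then 1 else 0))"

definition omt :: "('i::finite \<Rightarrow> 'a::euclidean_space) \<Rightarrow> 'i \<Rightarrow> 'a" where
  "omt alpha i = (2 / inner (alpha i) (alpha i)) *\<^sub>R fund_weight alpha i"

definition dominant_integral :: "('i::finite \<Rightarrow> 'a::euclidean_space) \<Rightarrow> 'a \<Rightarrow> bool" where
  "dominant_integral alpha lam \<longleftrightarrow>
     (\<forall>i. \<exists>k::nat. 2 * inner lam (alpha i) / inner (alpha i) (alpha i) = real k)"

definition weight_le :: "('i::finite \<Rightarrow> 'a::euclidean_space) \<Rightarrow> 'a \<Rightarrow> 'a \<Rightarrow> bool" where
  "weight_le alpha \<mu> \<nu> \<longleftrightarrow> (\<exists>c::'i \<Rightarrow> nat. \<nu> - \<mu> = (\<Sum>i\<in>UNIV. of_nat (c i) *\<^sub>R alpha i))"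

text \<open>Weights of the irreducible module of highest weight lam (lam dominant integral),
  via the classical characterization (Humphreys, Sec. 21.3): mu is a weight iff
  w mu \<le> lam for every w in W.\<close>
definition weights :: "'a::euclidean_space set \<Rightarrow> ('i::finite \<Rightarrow> 'a) \<Rightarrow> 'a \<Rightarrow> 'a set" where
  "weights \<Phi> alpha lam = {\<mu>. \<forall>w\<in>weyl_group \<Phi>. weight_le alpha (w \<mu>) lam}"

definition weight_polytope :: "'a::euclidean_space set \<Rightarrow> 'a \<Rightarrow> 'a set" where
  "weight_polytope \<Phi> lam = convex hull ((\<lambda>w. w lam) ` weyl_group \<Phi>)"

text \<open>P_i: weights whose alpha_i-coordinate equals m_i = (lam, omega-tilde_i).\<close>
definition coord_weights :: "'a::euclidean_space set \<Rightarrow> ('i::finite \<Rightarrow> 'a) \<Rightarrow> 'a \<Rightarrow> 'i \<Rightarrow> 'a set" where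
  "coord_weights \<Phi> alpha lam i =
     {\<mu> \<in> weights \<Phi> alpha lam. inner \<mu> (omt alpha i) = inner lam (omt alpha i)}"

definition coord_face :: "'a::euclidean_space set \<Rightarrow> ('i::finite \<Rightarrow> 'a) \<Rightarrow> 'a \<Rightarrow> 'i \<Rightarrow> 'a set" where
  "coord_face \<Phi> alpha lam i = convex hull (coord_weights \<Phi> alpha lam i)"

definition is_facet :: "'a::euclidean_space set \<Rightarrow> 'a set \<Rightarrow> bool" where
  "is_facet F S \<longleftrightarrow> F face_of S \<and> aff_dim F = int DIM('a) - 1"

end

theory Submission
  imports Defs
begin


lemma rs_refl_linear: "linear (rs_refl b)"
  unfolding rs_refl_def
  by (rule linearI) (simp_all add: inner_add_left add_divide_distrib scaleR_add_left algebra_simps)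

lemma rs_refl_inner: "b \<noteq> 0 \<Longrightarrow> inner (rs_refl b x) (rs_refl b y) = inner x y"
  by (simp add: rs_refl_def inner_diff_left inner_diff_right inner_commute field_simps)

lemma rs_refl_adj: "inner (rs_refl b x) y = inner x (rs_refl b y)"
  by (simp add: rs_refl_def inner_diff_left inner_diff_right inner_commute field_simps)

lemma rs_refl_invol: "b \<noteq> 0 \<Longrightarrow> rs_refl b (rs_refl b x) = x"
  by (simp add: rs_refl_def inner_diff_left inner_commute field_simps algebra_simps)

lemma rs_refl_self: "b \<noteq> 0 \<Longrightarrow> rs_refl b b = - b"
  by (simp add: rs_refl_def scaleR_2 algebra_simps)

lemma rs_refl_neg: "rs_refl (- b) = rs_refl b"
  by (auto simp: rs_refl_def fun_eq_iff)




locale rsys =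
  fixes Phi :: "'a::euclidean_space set" and alpha :: "'i::finite \<Rightarrow> 'a"
  assumes RS: "root_system Phi" and BS: "is_base Phi alpha"
begin

lemma finite_Phi: "finite Phi" and zero_notin: "0 \<notin> Phi"
  and refl_in: "a\<in>Phi \<Longrightarrow> b\<in>Phi \<Longrightarrow> rs_refl a b \<in> Phi"
  and cartan: "a\<in>Phi \<Longrightarrow> b\<in>Phi \<Longrightarrow> 2 * inner b a / inner a a \<in> \<int>"
  and reduced: "a\<in>Phi \<Longrightarrow> c *\<^sub>R a \<in> Phi \<Longrightarrow> c = 1 \<or> c = -1"
  using RS unfolding root_system_def by auto

lemma inj_alpha: "inj alpha" and alpha_in: "alpha j \<in> Phi"
  and indep: "independent (range alpha)" and span_alpha: "span (range alpha) = UNIV"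
  and root_dec: "b \<in> Phi \<Longrightarrow> \<exists>c::'i \<Rightarrow> int. b = (\<Sum>i\<in>UNIV. of_int (c i) *\<^sub>R alpha i)
            \<and> ((\<forall>i. c i \<ge> 0) \<or> (\<forall>i. c i \<le> 0))"
  using BS unfolding is_base_def by auto

lemma alpha_nz: "alpha j \<noteq> 0" using alpha_in zero_notin by metis

lemma alpha_sq_pos: "inner (alpha j) (alpha j) > 0" using alpha_nz by simp

lemma repr: "\<exists>c. x = (\<Sum>k\<in>UNIV. c k *\<^sub>R alpha k)"
proof -
  have "x \<in> span (range alpha)" using span_alpha by simp
  then obtain u where u: "(\<Sum>v\<in>range alpha. u v *\<^sub>R v) = x"
    using span_finite[of "range alpha"] by auto
  have "(\<Sum>v\<in>range alpha. u v *\<^sub>R v) = (\<Sum>k\<in>UNIV. u (alpha k) *\<^sub>R alpha k)"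
    using sum.reindex[OF inj_alpha, of "\<lambda>v. u v *\<^sub>R v"] by simp
  then show ?thesis using u by metis
qed

lemma orth_zero: assumes "\<And>k. inner x (alpha k) = 0" shows "x = 0"
proof -
  obtain c where c: "x = (\<Sum>k\<in>UNIV. c k *\<^sub>R alpha k)" using repr by blast
  have "inner x x = (\<Sum>k\<in>UNIV. c k * inner x (alpha k))"
    by (subst (2) c) (simp add: inner_sum_right)
  also have "\<dots> = 0" using assms by simp
  finally show ?thesis by simp
qed

lemma dual_exists: "\<exists>v. \<forall>k. inner v (alpha k) = (if k = j then 1 else 0)"
proof -
  obtain g where g: "linear g" "\<forall>x\<in>range alpha. g x = (if x = alpha j then 1 else (0::real))"
    using linear_independent_extend[OF indep, of "\<lambda>x. if x = alpha j then 1 else (0::real)"] by blast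
  define v where "v = (\<Sum>b\<in>Basis. g b *\<^sub>R b)"
  have vx: "inner v x = g x" for x
  proof -
    have "g x = g (\<Sum>b\<in>Basis. (x \<bullet> b) *\<^sub>R b)" by (simp add: euclidean_representation)
    also have "\<dots> = (\<Sum>b\<in>Basis. (x \<bullet> b) * g b)"
      using g(1) by (simp add: linear_sum linear_scale)
    also have "\<dots> = (\<Sum>b\<in>Basis. g b * (b \<bullet> x))" by (simp add: inner_commute mult.commute)
    also have "\<dots> = inner v x" by (simp add: v_def inner_sum_left)
    finally show ?thesis by simp
  qed
  show ?thesis
    by (rule exI[of _ v]) (use vx g(2) inj_alpha in \<open>auto simp: inj_eq\<close>)
qed

lemma fund_weight_prop:
  "2 * inner (fund_weight alpha j) (alpha k) / inner (alpha k) (alpha k) = (if k = j then 1 else 0)"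
proof -
  let ?P = "\<lambda>v. \<forall>k. 2 * inner v (alpha k) / inner (alpha k) (alpha k) = (if k = j then 1 else 0)"
  obtain d where d: "\<forall>k. inner d (alpha k) = (if k = j then 1 else 0)" using dual_exists by blast
  define v where "v = (inner (alpha j) (alpha j) / 2) *\<^sub>R d"
  have "?P v" using d alpha_sq_pos by (auto simp: v_def)
  moreover have "w = v" if "?P w" for w
  proof -
    have "inner (w - v) (alpha k) = 0" for k
      using spec[OF that, of k] spec[OF \<open>?P v\<close>, of k] alpha_sq_pos[of k]
      by (simp add: inner_diff_left field_simps split: if_splits)
    then show ?thesis using orth_zero by force
  qed
  ultimately have "?P (THE v. ?P v)" by (rule theI)
  then show ?thesis unfolding fund_weight_def by blast
qed

lemma omt_dual: "inner (alpha k) (omt alpha j) = (if k = j then 1 else 0)"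
  using fund_weight_prop[of j k] alpha_sq_pos[of k] alpha_sq_pos[of j]
  by (auto simp: omt_def inner_commute field_simps split: if_splits)

lemma coeff: "inner (\<Sum>k\<in>UNIV. c k *\<^sub>R alpha k) (omt alpha j) = c j"
  by (simp add: inner_sum_left omt_dual if_distrib if_distribR cong: if_cong)

lemma omt_nz: "omt alpha j \<noteq> 0" using omt_dual[of j j] by auto

end



lemma refl_conj:
  assumes "linear w" "\<And>x y. inner (w x) (w y) = inner x y"
  shows "rs_refl (w b) (w x) = w (rs_refl b x)"
  using assms by (simp add: rs_refl_def linear_diff linear_scale)

context rsys begin

definition pos :: "'a \<Rightarrow> bool" where
  "pos b \<longleftrightarrow> (\<exists>c::'i \<Rightarrow> nat. b = (\<Sum>k\<in>UNIV. of_nat (c k) *\<^sub>R alpha k))"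

lemma coeff_nat: "inner (\<Sum>k\<in>UNIV. of_nat (c k) *\<^sub>R alpha k) (omt alpha j) = of_nat (c j)"
  using coeff[of "\<lambda>k. of_nat (c k)"] by simp

lemma pos_coeff: "pos b \<Longrightarrow> inner b (omt alpha j) \<ge> 0"
  unfolding pos_def using coeff_nat by fastforce

lemma root_sign: assumes "b \<in> Phi" shows "pos b \<or> pos (- b)"
proof -
  obtain c :: "'i \<Rightarrow> int" where c: "b = (\<Sum>i\<in>UNIV. of_int (c i) *\<^sub>R alpha i)"
    "(\<forall>i. c i \<ge> 0) \<or> (\<forall>i. c i \<le> 0)" using root_dec[OF assms] by blast
  show ?thesis
  proof (cases "\<forall>i. c i \<ge> 0")
    case True
    have "b = (\<Sum>i\<in>UNIV. of_nat (nat (c i)) *\<^sub>R alpha i)"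
      using c(1) True by simp
    then show ?thesis unfolding pos_def by (intro disjI1) (rule exI[of _ "\<lambda>i. nat (c i)"])
  next
    case False
    then have F: "\<forall>i. c i \<le> 0" using c(2) by auto
    have "- b = (\<Sum>i\<in>UNIV. of_nat (nat (- c i)) *\<^sub>R alpha i)"
      using c(1) F by (simp add: sum_negf[symmetric])
    then show ?thesis unfolding pos_def by (intro disjI2) (rule exI[of _ "\<lambda>i. nat (- c i)"])
  qed
qed

lemma not_pos_both: assumes "pos b" "pos (- b)" shows "b = 0"
proof -
  have "inner b (omt alpha k) = 0" for k
    using pos_coeff[OF assms(1), of k] pos_coeff[OF assms(2), of k] by simp
  then have "inner b (alpha k) = 0" for k
  proof -
    obtain c where "b = (\<Sum>k\<in>UNIV. c k *\<^sub>R alpha k)" using repr by blast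
    then have "c j = 0" for j using coeff[of c j] \<open>\<And>k. inner b (omt alpha k) = 0\<close> by simp
    then show ?thesis using \<open>b = _\<close> by simp
  qed
  then show ?thesis using orth_zero by blast
qed

lemma s_in: "b \<in> Phi \<Longrightarrow> rs_refl (alpha j) b \<in> Phi" using refl_in alpha_in by blast

lemma s_coeff: "k \<noteq> j \<Longrightarrow> inner (rs_refl (alpha j) b) (omt alpha k) = inner b (omt alpha k)"
  by (simp add: rs_refl_def inner_diff_left omt_dual)

lemma pos_refl_simple:
  assumes "b \<in> Phi" "pos b" "b \<noteq> alpha j"
  shows "pos (rs_refl (alpha j) b)"
proof -
  obtain c where c: "b = (\<Sum>k\<in>UNIV. of_nat (c k) *\<^sub>R alpha k)" using assms(2) pos_def by blast
  have "\<exists>k. k \<noteq> j \<and> c k > 0"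
  proof (rule ccontr)
    assume "\<not> ?thesis"
    then have z: "\<forall>k. k \<noteq> j \<longrightarrow> c k = 0" by auto
    have bj: "b = of_nat (c j) *\<^sub>R alpha j"
      unfolding c by (subst sum.remove[of UNIV j]) (use z in auto)
    then have "real (c j) = 1 \<or> real (c j) = -1" using reduced[OF alpha_in, of "real (c j)"] assms(1) by simp
    then have "c j = 1" by auto
    then show False using bj assms(3) by simp
  qed
  then obtain k where k: "k \<noteq> j" "c k > 0" by blast
  have "rs_refl (alpha j) b \<in> Phi" using s_in assms(1) .
  moreover have "\<not> pos (- rs_refl (alpha j) b)"
  proof
    assume "pos (- rs_refl (alpha j) b)"
    then have "inner (- rs_refl (alpha j) b) (omt alpha k) \<ge> 0" by (rule pos_coeff)
    moreover have "inner b (omt alpha k) = c k" using c coeff_nat by simp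
    ultimately show False using s_coeff[OF k(1)] k(2) by simp
  qed
  ultimately show ?thesis using root_sign by blast
qed

primrec ws :: "'i list \<Rightarrow> 'a \<Rightarrow> 'a" where
  "ws [] = id"
| "ws (j # l) = rs_refl (alpha j) \<circ> ws l"

lemma ws_append: "ws (l1 @ l2) = ws l1 \<circ> ws l2"
  by (induction l1) auto

lemma ws_linear: "linear (ws l)"
proof (induction l)
  case Nil show ?case by (simp only: ws.simps) (rule linearI, simp_all)
next
  case (Cons j l) then show ?case by (simp only: ws.simps) (rule linear_compose[OF _ rs_refl_linear])
qed

lemma ws_inner: "inner (ws l x) (ws l y) = inner x y"
  by (induction l arbitrary: x y) (auto simp: rs_refl_inner alpha_nz)

lemma ws_adj: "inner (ws l x) y = inner x (ws (rev l) y)"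
  by (induction l arbitrary: x y) (auto simp: rs_refl_adj ws_append)

lemma ws_Phi: "b \<in> Phi \<Longrightarrow> ws l b \<in> Phi"
  by (induction l) (auto simp: s_in)

lemma ws_rev_inv: "ws (rev l) (ws l x) = x"
  by (induction l arbitrary: x) (auto simp: ws_append rs_refl_invol alpha_nz)

lemma ws_inv_rev: "ws l (ws (rev l) x) = x"
  using ws_rev_inv[of "rev l"] by simp

lemma ws_conj: "rs_refl (ws l b) \<circ> ws l = ws l \<circ> rs_refl b"
  using refl_conj[OF ws_linear ws_inner] by (auto simp: fun_eq_iff)

lemma W_comp: "w \<in> weyl_group Phi \<Longrightarrow> v \<in> weyl_group Phi \<Longrightarrow> w \<circ> v \<in> weyl_group Phi"
  by (induction rule: weyl_group.induct) (auto simp: comp_assoc intro: weyl_group.intros)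

lemma ws_W: "ws l \<in> weyl_group Phi"
proof (induction l)
  case Nil then show ?case by (simp only: ws.simps weyl_group.weyl_id)
next
  case (Cons j l) then show ?case by (simp only: ws.simps) (rule weyl_group.weyl_step[OF Cons.IH alpha_in])
qed

definition hgt :: "'a \<Rightarrow> real" where "hgt b = (\<Sum>k\<in>UNIV. inner b (omt alpha k))"

lemma hgt_pos: "pos b \<Longrightarrow> hgt b \<ge> 0"
  unfolding hgt_def by (intro sum_nonneg pos_coeff)

lemma hgt_s: "hgt (rs_refl (alpha j) b) = hgt b - 2 * inner b (alpha j) / inner (alpha j) (alpha j)"
proof -
  define t where "t = 2 * inner b (alpha j) / inner (alpha j) (alpha j)"
  have "hgt (rs_refl (alpha j) b) = (\<Sum>k\<in>UNIV. inner b (omt alpha k) - t * (if j = k then 1 else 0))"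
    unfolding hgt_def t_def by (simp add: rs_refl_def inner_diff_left omt_dual)
  also have "\<dots> = hgt b - t" by (simp add: hgt_def sum_subtractf flip: sum_distrib_left)
  finally show ?thesis by (simp add: t_def)
qed

lemma exists_pos_pair:
  assumes "b \<noteq> 0" "pos b" shows "\<exists>j. inner b (alpha j) > 0"
proof (rule ccontr)
  assume "\<not> ?thesis"
  then have le: "\<forall>j. inner b (alpha j) \<le> 0" by (simp add: not_less)
  obtain c where c: "b = (\<Sum>k\<in>UNIV. of_nat (c k) *\<^sub>R alpha k)" using assms(2) pos_def by blast
  have "inner b b = (\<Sum>k\<in>UNIV. of_nat (c k) * inner b (alpha k))"
    by (subst (2) c) (simp add: inner_sum_right)
  also have "\<dots> \<le> 0" using le by (intro sum_nonpos) (simp add: mult_nonneg_nonpos)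
  finally show False using assms(1) by (metis inner_gt_zero_iff not_le)
qed

lemma refl_word_pos:
  "\<forall>b. b \<in> Phi \<longrightarrow> pos b \<longrightarrow> hgt b < real n \<longrightarrow> (\<exists>l. rs_refl b = ws l)"
proof (induction n)
  case 0 show ?case
  proof (intro allI impI)
    fix b assume "pos b" "hgt b < real 0" then show "\<exists>l. rs_refl b = ws l" using hgt_pos[of b] by simp
  qed
next
  case (Suc n)
  show ?case
  proof (intro allI impI)
    fix b assume b: "b \<in> Phi" "pos b" "hgt b < real (Suc n)"
    have "b \<noteq> 0" using b zero_notin by auto
    then obtain j where j: "inner b (alpha j) > 0" using exists_pos_pair b by blast
    show "\<exists>l. rs_refl b = ws l"
    proof (cases "b = alpha j")
      case True
      then show ?thesis by (intro exI[of _ "[j]"]) auto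
    next
      case False
      define t where "t = 2 * inner b (alpha j) / inner (alpha j) (alpha j)"
      have t0: "t > 0" using j alpha_sq_pos[of j] by (simp add: t_def)
      have "t \<in> \<int>" unfolding t_def using cartan[OF alpha_in b(1)] .
      then have t1: "t \<ge> 1" using t0 by (metis Ints_cases int_one_le_iff_zero_less of_int_0_less_iff of_int_1_le_iff)
      define b' where "b' = rs_refl (alpha j) b"
      have b': "b' \<in> Phi" "pos b'" using s_in[OF b(1)] pos_refl_simple[OF b(1,2) False] by (auto simp: b'_def)
      have "hgt b' = hgt b - t" by (simp add: b'_def hgt_s t_def)
      then have "hgt b' < real n" using b(3) t1 by simp
      then obtain l where l: "rs_refl b' = ws l" using Suc.IH b' by blast
      have c: "rs_refl (ws [j] b) \<circ> ws [j] = ws [j] \<circ> rs_refl b" by (rule ws_conj)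
      have "rs_refl b = ws ([j] @ l @ [j])"
      proof
        fix x
        have key: "rs_refl b (ws [j] y) = ws [j] (rs_refl b' y)" for y
        proof -
          have "ws [j] (rs_refl b (ws [j] y)) = rs_refl b' (ws [j] (ws [j] y))"
            using fun_cong[OF c, of "ws [j] y"] by (simp add: b'_def)
          then have "ws [j] (rs_refl b (ws [j] y)) = rs_refl b' y" by (simp add: rs_refl_invol alpha_nz)
          then have "ws [j] (ws [j] (rs_refl b (ws [j] y))) = ws [j] (rs_refl b' y)" by simp
          then show ?thesis by (simp add: rs_refl_invol alpha_nz)
        qed
        show "rs_refl b x = ws ([j] @ l @ [j]) x"
          using key[of "ws [j] x"] by (simp add: rs_refl_invol alpha_nz ws_append l)
      qed
      then show ?thesis by blast
    qed
  qed
qed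

lemma refl_word: assumes "b \<in> Phi" shows "\<exists>l. rs_refl b = ws l"
proof -
  obtain n :: nat where n: "\<bar>hgt b\<bar> < real n" using reals_Archimedean2 by blast
  have "- b \<in> Phi"
    using refl_in[OF assms assms] rs_refl_self zero_notin assms by metis
  have hn: "hgt (- b) = - hgt b" by (simp add: hgt_def sum_negf)
  show ?thesis
  proof (cases "pos b")
    case True then show ?thesis using refl_word_pos[of n] assms n by auto
  next
    case False
    then have "pos (- b)" using root_sign assms by blast
    then obtain l where "rs_refl (- b) = ws l" using refl_word_pos[of n] \<open>- b \<in> Phi\<close> n hn by force
    then show ?thesis using rs_refl_neg by metis
  qed
qed

lemma W_words: "w \<in> weyl_group Phi \<Longrightarrow> \<exists>l. w = ws l"
proof (induction rule: weyl_group.induct)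
  case weyl_id then show ?case by (intro exI[of _ "[]"]) simp
next
  case (weyl_step w a)
  then obtain l l' where "w = ws l" "rs_refl a = ws l'" using refl_word by blast
  then show ?case by (intro exI[of _ "l' @ l"]) (simp add: ws_append)
qed

end



context rsys begin

lemma wle_pos: "weight_le alpha \<mu> \<nu> \<longleftrightarrow> pos (\<nu> - \<mu>)"
  by (simp add: weight_le_def pos_def)

lemma pos_add: assumes "pos a" "pos b" shows "pos (a + b)"
proof -
  obtain c d where "a = (\<Sum>k\<in>UNIV. of_nat (c k) *\<^sub>R alpha k)" "b = (\<Sum>k\<in>UNIV. of_nat (d k) *\<^sub>R alpha k)"
    using assms pos_def by blast
  then have "a + b = (\<Sum>k\<in>UNIV. of_nat (c k + d k) *\<^sub>R alpha k)"
    by (simp add: sum.distrib[symmetric] scaleR_add_left)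
  then show ?thesis unfolding pos_def by (rule exI[of _ "\<lambda>k. c k + d k"])
qed

lemma pos_scale: assumes "pos a" shows "pos (of_nat n *\<^sub>R a)"
proof -
  obtain c where "a = (\<Sum>k\<in>UNIV. of_nat (c k) *\<^sub>R alpha k)" using assms pos_def by blast
  then have "of_nat n *\<^sub>R a = (\<Sum>k\<in>UNIV. of_nat (n * c k) *\<^sub>R alpha k)"
    by (simp add: scaleR_sum_right)
  then show ?thesis unfolding pos_def by (rule exI[of _ "\<lambda>k. n * c k"])
qed

lemma pos_zero: "pos 0"
  unfolding pos_def by (rule exI[of _ "\<lambda>_. 0"]) simp

lemma pos_alpha: "pos (alpha k)"
proof -
  have "alpha k = (\<Sum>i\<in>UNIV. of_nat (if i = k then 1 else 0) *\<^sub>R alpha i)"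
    by (simp add: if_distrib if_distribR cong: if_cong)
  then show ?thesis unfolding pos_def by (rule exI[of _ "\<lambda>i. if i = k then 1 else 0"])
qed

lemma deletion:
  "pos (- ws l (alpha k)) \<Longrightarrow> \<exists>l'. length l' < length l \<and> ws l' = ws l \<circ> rs_refl (alpha k)"
proof (induction l)
  case Nil
  then have "alpha k = 0" using not_pos_both[OF pos_alpha] by simp
  then show ?case using alpha_nz by blast
next
  case (Cons a t)
  show ?case
  proof (cases "pos (- ws t (alpha k))")
    case True
    then obtain t' where t': "length t' < length t" "ws t' = ws t \<circ> rs_refl (alpha k)" using Cons.IH by blast
    show ?thesis by (intro exI[of _ "a # t'"]) (simp add: t' comp_assoc)
  next
    case False
    have r: "ws t (alpha k) \<in> Phi" using ws_Phi alpha_in by blast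
    then have p: "pos (ws t (alpha k))" using False root_sign by blast
    have eq: "ws t (alpha k) = alpha a"
    proof (rule ccontr)
      assume "ws t (alpha k) \<noteq> alpha a"
      then have "pos (rs_refl (alpha a) (ws t (alpha k)))" using pos_refl_simple[OF r p] by blast
      moreover have "pos (- rs_refl (alpha a) (ws t (alpha k)))" using Cons.prems by simp
      ultimately have "rs_refl (alpha a) (ws t (alpha k)) = 0" by (rule not_pos_both)
      moreover have "rs_refl (alpha a) (ws t (alpha k)) \<in> Phi" using s_in r by blast
      ultimately show False using zero_notin by simp
    qed
    have "rs_refl (alpha a) \<circ> ws t = ws t \<circ> rs_refl (alpha k)" using ws_conj[of t "alpha k"] eq by simp
    then have "ws (a # t) \<circ> rs_refl (alpha k) = ws t"
      by (simp add: comp_assoc fun_eq_iff rs_refl_invol alpha_nz)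
    then show ?thesis by (intro exI[of _ t]) (simp add: comp_def)
  qed
qed

definition minimal :: "'i list \<Rightarrow> bool" where
  "minimal l \<longleftrightarrow> (\<forall>l'. ws l' = ws l \<longrightarrow> length l \<le> length l')"

lemma minimal_exists: "\<exists>l'. ws l' = ws l \<and> minimal l'"
proof (induction "length l" arbitrary: l rule: less_induct)
  case less
  show ?case
  proof (cases "minimal l")
    case True then show ?thesis by blast
  next
    case False
    then obtain l'' where "ws l'' = ws l" "length l'' < length l" unfolding minimal_def by force
    then show ?thesis using less by metis
  qed
qed

lemma dom_le:
  assumes D: "dominant_integral alpha lam"
  shows "minimal l \<Longrightarrow> pos (lam - ws l lam)"
proof (induction l rule: rev_induct)
  case Nil then show ?case by (simp add: pos_zero)
next
  case (snoc k l0)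
  have m0: "minimal l0"
    unfolding minimal_def
  proof (intro allI impI)
    fix l' assume "ws l' = ws l0"
    then have "ws (l' @ [k]) = ws (l0 @ [k])" by (simp add: ws_append)
    then show "length l0 \<le> length l'" using snoc.prems unfolding minimal_def by force
  qed
  have np: "\<not> pos (- ws l0 (alpha k))"
  proof
    assume "pos (- ws l0 (alpha k))"
    then obtain l' where "length l' < length l0" "ws l' = ws l0 \<circ> rs_refl (alpha k)" using deletion by blast
    then show False using snoc.prems unfolding minimal_def by (force simp: ws_append)
  qed
  then have pp: "pos (ws l0 (alpha k))" using root_sign ws_Phi alpha_in by blast
  obtain n :: nat where n: "2 * inner lam (alpha k) / inner (alpha k) (alpha k) = real n"
    using D unfolding dominant_integral_def by blast
  have sk: "rs_refl (alpha k) lam = lam - real n *\<^sub>R alpha k" by (simp add: rs_refl_def n)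
  have "ws (l0 @ [k]) lam = ws l0 lam - real n *\<^sub>R ws l0 (alpha k)"
    by (simp add: ws_append sk linear_diff[OF ws_linear] linear_scale[OF ws_linear])
  then have eq: "lam - ws (l0 @ [k]) lam = (lam - ws l0 lam) + of_nat n *\<^sub>R ws l0 (alpha k)" by simp
  show ?case unfolding eq by (rule pos_add[OF snoc.IH[OF m0] pos_scale[OF pp]])
qed

lemma W_le: assumes D: "dominant_integral alpha lam" and w: "w \<in> weyl_group Phi"
  shows "pos (lam - w lam)"
proof -
  obtain l where "w = ws l" using W_words w by blast
  moreover obtain l' where "ws l' = ws l" "minimal l'" using minimal_exists by blast
  ultimately show ?thesis using dom_le[OF D] by metis
qed

lemma lam_weight: "dominant_integral alpha lam \<Longrightarrow> lam \<in> weights Phi alpha lam"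
  unfolding weights_def using W_le by (simp add: wle_pos)

lemma weights_W: assumes mu: "\<mu> \<in> weights Phi alpha lam" and w: "w \<in> weyl_group Phi"
  shows "w \<mu> \<in> weights Phi alpha lam"
  unfolding weights_def
proof (intro CollectI ballI)
  fix v assume "v \<in> weyl_group Phi"
  then have "v \<circ> w \<in> weyl_group Phi" by (rule W_comp[OF _ w])
  then have "weight_le alpha ((v \<circ> w) \<mu>) lam" using mu unfolding weights_def by blast
  then show "weight_le alpha (v (w \<mu>)) lam" by simp
qed

lemma weight_le_lam: "\<mu> \<in> weights Phi alpha lam \<Longrightarrow> pos (lam - \<mu>)"
  unfolding weights_def using weyl_group.weyl_id wle_pos by fastforce

end



context rsys begin

lemma W_props: assumes "w \<in> weyl_group Phi"
  shows "linear w" "\<And>b. b \<in> Phi \<Longrightarrow> w b \<in> Phi"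
  using W_words[OF assms] ws_linear ws_Phi by auto

lemma lin_eq_alpha: assumes "linear f" "linear g" "\<And>k. f (alpha k) = g (alpha k)" shows "f = g"
proof
  fix x
  obtain c where c: "x = (\<Sum>k\<in>UNIV. c k *\<^sub>R alpha k)" using repr by blast
  show "f x = g x" unfolding c
    by (simp add: linear_sum[OF assms(1)] linear_sum[OF assms(2)] linear_scale[OF assms(1)]
        linear_scale[OF assms(2)] assms(3))
qed

lemma finite_W: "finite (weyl_group Phi)"
proof -
  let ?r = "\<lambda>w. restrict w (range alpha)"
  have inj: "inj_on ?r (weyl_group Phi)"
  proof (rule inj_onI)
    fix w v assume wv: "w \<in> weyl_group Phi" "v \<in> weyl_group Phi" "?r w = ?r v"
    have "w (alpha k) = v (alpha k)" for k using fun_cong[OF wv(3), of "alpha k"] by simp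
    then show "w = v" by (rule lin_eq_alpha[OF W_props(1)[OF wv(1)] W_props(1)[OF wv(2)]])
  qed
  have sub: "?r ` weyl_group Phi \<subseteq> (\<Pi>\<^sub>E x \<in> range alpha. Phi)"
  proof (rule image_subsetI)
    fix w assume w: "w \<in> weyl_group Phi"
    show "?r w \<in> (\<Pi>\<^sub>E x \<in> range alpha. Phi)"
      unfolding restrict_PiE_iff using W_props(2)[OF w alpha_in] by blast
  qed
  have fin: "finite (\<Pi>\<^sub>E x \<in> range alpha. Phi)" by (intro finite_PiE) (auto simp: finite_Phi)
  have "finite (?r ` weyl_group Phi)" by (rule finite_subset[OF sub fin])
  then show ?thesis by (rule finite_imageD[OF _ inj])
qed

definition negset :: "'a \<Rightarrow> 'a set" where
  "negset x = {b \<in> Phi. pos b \<and> inner x b < 0}"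

lemma dominant_conj: "\<exists>l. \<forall>j. inner (ws l x) (alpha j) \<ge> 0"
proof (induction "card (negset x)" arbitrary: x rule: less_induct)
  case less
  show ?case
  proof (cases "\<forall>j. inner x (alpha j) \<ge> 0")
    case True then show ?thesis by (intro exI[of _ "[]"]) simp
  next
    case False
    then obtain j where j: "inner x (alpha j) < 0" by (auto simp: not_le)
    define y where "y = rs_refl (alpha j) x"
    have fin: "finite (negset x)" unfolding negset_def using finite_Phi by simp
    have aj: "alpha j \<in> negset x" unfolding negset_def using alpha_in pos_alpha j by simp
    have sub: "negset y \<subseteq> rs_refl (alpha j) ` (negset x - {alpha j})"
    proof
      fix b assume b: "b \<in> negset y"
      then have b1: "b \<in> Phi" "pos b" "inner y b < 0" unfolding negset_def by auto
      have ya: "inner y (alpha j) = - inner x (alpha j)"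
        unfolding y_def by (simp add: rs_refl_adj rs_refl_self alpha_nz)
      then have "b \<noteq> alpha j" using b1 j by auto
      define g where "g = rs_refl (alpha j) b"
      have g: "g \<in> Phi" "pos g" using s_in[OF b1(1)] pos_refl_simple[OF b1(1,2) \<open>b \<noteq> alpha j\<close>]
        by (auto simp: g_def)
      have "inner x g = inner y b" unfolding g_def y_def by (simp add: rs_refl_adj)
      moreover have "g \<noteq> alpha j"
      proof
        assume "g = alpha j"
        then have "b = - alpha j" unfolding g_def
          by (metis rs_refl_invol rs_refl_self alpha_nz)
        then show False using not_pos_both[OF pos_alpha] b1(2) alpha_nz by simp
      qed
      moreover have "b = rs_refl (alpha j) g" unfolding g_def by (simp add: rs_refl_invol alpha_nz)
      ultimately show "b \<in> rs_refl (alpha j) ` (negset x - {alpha j})"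
        using g b1 unfolding negset_def by auto
    qed
    have "card (negset y) \<le> card (rs_refl (alpha j) ` (negset x - {alpha j}))"
      using sub fin by (intro card_mono) auto
    also have "\<dots> \<le> card (negset x - {alpha j})" by (rule card_image_le) (use fin in auto)
    also have "\<dots> < card (negset x)" using card_Diff1_less[OF fin aj] .
    finally have "\<exists>l. \<forall>j. inner (ws l y) (alpha j) \<ge> 0" by (rule less)
    then obtain l where "\<forall>j. inner (ws l y) (alpha j) \<ge> 0" by blast
    then show ?thesis by (intro exI[of _ "l @ [j]"]) (simp add: ws_append y_def)
  qed
qed

lemma dom_pos_inner: assumes "\<forall>j. inner d (alpha j) \<ge> 0" "pos v" shows "inner d v \<ge> 0"
proof -
  obtain c where "v = (\<Sum>k\<in>UNIV. of_nat (c k) *\<^sub>R alpha k)" using assms(2) pos_def by blast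
  then show ?thesis using assms(1) by (simp add: inner_sum_right sum_nonneg)
qed

lemma weights_in_P:
  assumes D: "dominant_integral alpha lam" and mu: "\<mu> \<in> weights Phi alpha lam"
  shows "\<mu> \<in> weight_polytope Phi lam"
proof (rule ccontr)
  assume nm: "\<mu> \<notin> weight_polytope Phi lam"
  have fo: "finite ((\<lambda>w. w lam) ` weyl_group Phi)" using finite_W by simp
  have "closed (weight_polytope Phi lam)" unfolding weight_polytope_def
    by (intro compact_imp_closed compact_convex_hull finite_imp_compact fo)
  then obtain a b where ab: "inner a \<mu> < b" "\<forall>x\<in>weight_polytope Phi lam. inner a x > b"
    using separating_hyperplane_closed_point[OF _ _ nm] unfolding weight_polytope_def
    by (metis convex_convex_hull)
  obtain l where l: "\<forall>j. inner (ws l (- a)) (alpha j) \<ge> 0" using dominant_conj by blast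
  have "pos (lam - ws l \<mu>)" using weight_le_lam weights_W[OF mu ws_W] by blast
  then have "inner (ws l (- a)) (lam - ws l \<mu>) \<ge> 0" using dom_pos_inner l by blast
  then have "inner (ws l (- a)) (ws l \<mu>) \<le> inner (ws l (- a)) lam" by (simp add: inner_diff_right)
  moreover have "inner (ws l (- a)) (ws l \<mu>) = inner (- a) \<mu>" by (rule ws_inner)
  moreover have "inner (ws l (- a)) lam = inner (- a) (ws (rev l) lam)" by (rule ws_adj)
  ultimately have i1: "inner (- a) \<mu> \<le> inner (- a) (ws (rev l) lam)" by simp
  have "ws (rev l) lam \<in> weight_polytope Phi lam"
    unfolding weight_polytope_def by (rule hull_inc) (use ws_W in blast)
  then have i2: "inner a (ws (rev l) lam) > b" using ab(2) by blast
  show False using i1 i2 ab(1) by (simp add: inner_minus_left)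
qed

end



context rsys begin

lemma f_pos: "pos v \<Longrightarrow> inner v (omt alpha j) \<ge> 0" by (rule pos_coeff)

lemma facet_imp:
  assumes eta: "\<eta> \<in> coord_weights Phi alpha lam i"
    and least: "\<forall>\<mu>\<in>coord_weights Phi alpha lam i. weight_le alpha \<eta> \<mu>"
    and facet: "is_facet (coord_face Phi alpha lam i) (weight_polytope Phi lam)"
    and ji: "j \<noteq> i"
  shows "inner \<eta> (omt alpha j) \<noteq> inner lam (omt alpha j)"
proof
  assume eq: "inner \<eta> (omt alpha j) = inner lam (omt alpha j)"
  let ?Pi = "coord_weights Phi alpha lam i"
  let ?F = "coord_face Phi alpha lam i"
  define Hi where "Hi = {x. inner (omt alpha i) x = inner lam (omt alpha i)}"
  define Hj where "Hj = {x. inner (omt alpha j) x = inner lam (omt alpha j)}"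
  have PiH: "?Pi \<subseteq> Hi \<inter> Hj"
  proof
    fix \<mu> assume mu: "\<mu> \<in> ?Pi"
    have "pos (\<mu> - \<eta>)" using least mu wle_pos by blast
    then have a: "inner (\<mu> - \<eta>) (omt alpha j) \<ge> 0" by (rule f_pos)
    have "pos (lam - \<mu>)" using mu weight_le_lam unfolding coord_weights_def by blast
    then have b: "inner (lam - \<mu>) (omt alpha j) \<ge> 0" by (rule f_pos)
    show "\<mu> \<in> Hi \<inter> Hj" using a b eq mu
      unfolding Hi_def Hj_def coord_weights_def by (auto simp: inner_diff_left inner_diff_right inner_commute)
  qed
  have FH: "?F \<subseteq> Hi \<inter> Hj" unfolding coord_face_def
    by (rule hull_minimal[OF PiH]) (simp add: Hi_def Hj_def convex_Int convex_hyperplane)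
  have ne: "?F \<noteq> {}" using eta hull_subset[of ?Pi convex] unfolding coord_face_def by blast
  have "affine hull ?F = Hi"
  proof (rule affine_dim_equal)
    show "affine (affine hull ?F)" by simp
    show "affine Hi" unfolding Hi_def by (rule affine_hyperplane)
    show "affine hull ?F \<noteq> {}" using ne by simp
    show "affine hull ?F \<subseteq> Hi" using FH by (intro hull_minimal) (auto simp: Hi_def affine_hyperplane)
    show "aff_dim (affine hull ?F) = aff_dim Hi"
      using facet omt_nz[of i] unfolding is_facet_def Hi_def by simp
  qed
  moreover have "affine hull ?F \<subseteq> Hj" using FH by (intro hull_minimal) (auto simp: Hj_def affine_hyperplane)
  moreover have "lam + alpha j \<in> Hi" unfolding Hi_def
    by (simp add: inner_add_right inner_commute omt_dual ji)
  moreover have "lam + alpha j \<notin> Hj" unfolding Hj_def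
    by (simp add: inner_add_right inner_commute omt_dual)
  ultimately show False by blast
qed

lemma orth_span: assumes "x \<in> span D" "\<And>d. d \<in> D \<Longrightarrow> inner v d = 0" shows "inner v x = 0"
  using span_induct[OF assms(1), of "\<lambda>x. inner v x = 0"] subspace_hyperplane[of v] assms(2) by auto

lemma card_UNIV_i: "card (UNIV :: 'i set) = DIM('a)"
proof -
  have "dim (UNIV :: 'a set) = card (range alpha)"
    by (rule dim_eq_card) (simp_all add: span_alpha indep)
  then show ?thesis using inj_alpha by (simp add: card_image)
qed

lemma imp_facet:
  assumes D: "dominant_integral alpha lam"
    and eta: "\<eta> \<in> coord_weights Phi alpha lam i"
    and R: "\<forall>j. j \<noteq> i \<longrightarrow> inner \<eta> (omt alpha j) \<noteq> inner lam (omt alpha j)"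
  shows "is_facet (coord_face Phi alpha lam i) (weight_polytope Phi lam)"
proof -
  let ?Pi = "coord_weights Phi alpha lam i"
  let ?F = "coord_face Phi alpha lam i"
  let ?P = "weight_polytope Phi lam"
  let ?O = "(\<lambda>w. w lam) ` weyl_group Phi"
  define H where "H = {x. inner (omt alpha i) x = inner lam (omt alpha i)}"
  have lamPi: "lam \<in> ?Pi" using lam_weight[OF D] unfolding coord_weights_def by simp
  have PiH: "?Pi \<subseteq> ?P \<inter> H"
    using weights_in_P[OF D] unfolding coord_weights_def H_def by (auto simp: inner_commute)
  have le: "inner (omt alpha i) x \<le> inner lam (omt alpha i)" if "x \<in> ?P" for x
  proof -
    have "?O \<subseteq> {x. inner (omt alpha i) x \<le> inner lam (omt alpha i)}"
    proof
      fix y assume "y \<in> ?O"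
      then obtain w where w: "w \<in> weyl_group Phi" "y = w lam" by blast
      have "inner (lam - w lam) (omt alpha i) \<ge> 0" using W_le[OF D w(1)] by (rule f_pos)
      then show "y \<in> {x. inner (omt alpha i) x \<le> inner lam (omt alpha i)}"
        using w by (simp add: inner_diff_left inner_diff_right inner_commute)
    qed
    then have "?P \<subseteq> {x. inner (omt alpha i) x \<le> inner lam (omt alpha i)}"
      unfolding weight_polytope_def by (intro hull_minimal) (auto simp: convex_halfspace_le)
    then show ?thesis using that by blast
  qed
  have face: "(?P \<inter> H) face_of ?P" unfolding H_def
    by (rule face_of_Int_supporting_hyperplane_le) (auto simp: weight_polytope_def le)
  have compO: "compact ?O" using finite_W by (intro finite_imp_compact) simp
  have FeqPH: "?F = ?P \<inter> H"
  proof
    show "?F \<subseteq> ?P \<inter> H" unfolding coord_face_def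
      by (rule hull_minimal[OF PiH]) (simp add: weight_polytope_def H_def convex_Int convex_hyperplane)
    obtain S' where S': "S' \<subseteq> ?O" "?P \<inter> H = convex hull S'"
      using face_of_convex_hull_subset[OF compO, of "?P \<inter> H"] face unfolding weight_polytope_def by blast
    have "S' \<subseteq> ?Pi"
    proof
      fix s assume s: "s \<in> S'"
      then have "s \<in> H" using S'(2) hull_subset[of S' convex] by blast
      moreover obtain w where "w \<in> weyl_group Phi" "s = w lam" using S'(1) s by blast
      then have "s \<in> weights Phi alpha lam" using weights_W lam_weight[OF D] by blast
      ultimately show "s \<in> ?Pi" unfolding coord_weights_def H_def by (simp add: inner_commute)
    qed
    then show "?P \<inter> H \<subseteq> ?F" unfolding coord_face_def S'(2) by (rule hull_mono)
  qed
  have up: "aff_dim ?F \<le> int DIM('a) - 1"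
  proof -
    have "?F \<subseteq> H" using FeqPH by blast
    then have "aff_dim ?F \<le> aff_dim H" by (rule aff_dim_subset)
    then show ?thesis using omt_nz[of i] unfolding H_def by simp
  qed
  define Dd where "Dd = (\<lambda>x. x - \<eta>) ` ?Pi"
  have mem: "x - y \<in> span Dd" if "x \<in> ?Pi" "y \<in> ?Pi" for x y
  proof -
    have "x - \<eta> \<in> span Dd" "y - \<eta> \<in> span Dd" using that by (auto simp: Dd_def intro: span_base)
    from span_diff[OF this] show ?thesis by simp
  qed
  have refl_Pi: "rs_refl (alpha j) \<mu> \<in> ?Pi" if "\<mu> \<in> ?Pi" "j \<noteq> i" for \<mu> j
  proof -
    have "rs_refl (alpha j) \<in> weyl_group Phi" using ws_W[of "[j]"] by simp
    then have "rs_refl (alpha j) \<mu> \<in> weights Phi alpha lam"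
      using weights_W that(1) unfolding coord_weights_def by blast
    then show ?thesis using that s_coeff[of i j \<mu>] unfolding coord_weights_def by auto
  qed
  have step1: "alpha j \<in> span Dd" if "\<mu> \<in> ?Pi" "j \<noteq> i" "inner \<mu> (alpha j) \<noteq> 0" for \<mu> j
  proof -
    define t where "t = 2 * inner \<mu> (alpha j) / inner (alpha j) (alpha j)"
    have t: "t \<noteq> 0" using that(3) alpha_sq_pos[of j] by (simp add: t_def)
    have "rs_refl (alpha j) \<mu> - \<mu> \<in> span Dd" using mem refl_Pi that by blast
    moreover have "rs_refl (alpha j) \<mu> - \<mu> = (- t) *\<^sub>R alpha j" by (simp add: rs_refl_def t_def)
    ultimately have "(- 1 / t) *\<^sub>R ((- t) *\<^sub>R alpha j) \<in> span Dd" by (metis span_mul)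
    then show ?thesis using t by simp
  qed
  have allA: "alpha j \<in> span Dd" if ji: "j \<noteq> i" for j
  proof (rule ccontr)
    assume "alpha j \<notin> span Dd"
    define B where "B = {k. k \<noteq> i \<and> alpha k \<notin> span Dd}"
    have jB: "j \<in> B" using ji \<open>alpha j \<notin> span Dd\<close> by (simp add: B_def)
    have orthB: "inner \<mu> (alpha k) = 0" if "k \<in> B" "\<mu> \<in> ?Pi" for k \<mu>
      using step1 that unfolding B_def by blast
    have orthAB: "inner (alpha k') (alpha k) = 0" if "k \<in> B" "k' \<notin> B" "k' \<noteq> i" for k k'
    proof -
      have "alpha k' \<in> span Dd" using that unfolding B_def by blast
      moreover have "inner (alpha k) d = 0" if "d \<in> Dd" for d
        using that orthB[OF \<open>k \<in> B\<close>] eta unfolding Dd_def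
        by (auto simp: inner_diff_right inner_commute)
      ultimately show ?thesis using orth_span by (metis inner_commute)
    qed
    have "pos (lam - \<eta>)" using eta weight_le_lam unfolding coord_weights_def by blast
    then obtain c where c: "lam - \<eta> = (\<Sum>k\<in>UNIV. of_nat (c k) *\<^sub>R alpha k)" using pos_def by blast
    have ci: "c i = 0"
      using coeff_nat[of c i] eta unfolding c[symmetric] coord_weights_def by (simp add: inner_diff_left)
    define g where "g = (\<Sum>k\<in>B. of_nat (c k) *\<^sub>R alpha k)"
    define h where "h = (\<Sum>k\<in>-B. of_nat (c k) *\<^sub>R alpha k)"
    have u: "B \<union> - B = UNIV" by blast
    have gh: "lam - \<eta> = g + h" unfolding c g_def h_def
      by (subst sum.union_disjoint[symmetric]) (auto simp: u)
    have hk: "inner h (alpha k) = 0" if "k \<in> B" for k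
      unfolding h_def inner_sum_left
    proof (rule sum.neutral, rule ballI)
      fix k' assume "k' \<in> - B"
      then show "inner (of_nat (c k') *\<^sub>R alpha k') (alpha k) = 0"
        using orthAB[OF that, of k'] ci by (cases "k' = i") auto
    qed
    have gk: "inner g (alpha k) = 0" if "k \<in> B" for k
    proof -
      have "inner (lam - \<eta>) (alpha k) = 0"
        using orthB[OF that lamPi] orthB[OF that eta] by (simp add: inner_diff_left)
      then show ?thesis using hk[OF that] gh by (simp add: inner_add_left)
    qed
    have "inner g g = (\<Sum>k\<in>B. of_nat (c k) * inner g (alpha k))"
      by (subst (2) g_def) (simp add: inner_sum_right)
    also have "\<dots> = 0" using gk by simp
    finally have g0: "g = 0" by simp
    have "inner g (omt alpha j) = of_nat (c j)"
      unfolding g_def inner_sum_left using jB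
      by (simp add: omt_dual if_distrib if_distribR cong: if_cong)
    then have "c j = 0" using g0 by simp
    then have "inner (lam - \<eta>) (omt alpha j) = 0" using coeff_nat[of c j] c by simp
    then have "inner \<eta> (omt alpha j) = inner lam (omt alpha j)" by (simp add: inner_diff_left)
    then show False using R ji by blast
  qed
  have "alpha ` (- {i}) \<subseteq> span Dd" using allA by auto
  then have "dim (alpha ` (- {i})) \<le> dim (span Dd)" by (rule dim_subset)
  then have "dim (alpha ` (- {i})) \<le> dim Dd" by (simp only: dim_span)
  moreover have "dim (alpha ` (- {i})) = DIM('a) - 1"
  proof -
    have "independent (alpha ` (- {i}))" using indep by (rule independent_mono) auto
    then have "dim (alpha ` (- {i})) = card (alpha ` (- {i}))" by (rule dim_eq_card_independent)
    also have "\<dots> = card (- {i} :: 'i set)" by (rule card_image[OF inj_on_subset[OF inj_alpha subset_UNIV]])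
    also have "\<dots> = card (UNIV :: 'i set) - 1"
      using card_Diff_singleton[of i "UNIV::'i set"] by (simp add: Compl_eq_Diff_UNIV)
    finally show ?thesis using card_UNIV_i by simp
  qed
  ultimately have dd: "DIM('a) - 1 \<le> dim Dd" by simp
  have "aff_dim ?Pi = int (dim Dd)"
    unfolding Dd_def by (rule aff_dim_eq_dim_subtract) (rule hull_inc[OF eta])
  moreover have "aff_dim ?F = aff_dim ?Pi" unfolding coord_face_def by (rule aff_dim_convex_hull)
  moreover have "DIM('a) \<ge> 1" using DIM_positive[where 'a='a] by linarith
  ultimately have "aff_dim ?F \<ge> int DIM('a) - 1" using dd by linarith
  then have "aff_dim ?F = int DIM('a) - 1" using up by linarith
  then show ?thesis unfolding is_facet_def using face FeqPH by simp
qed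

end

theorem corollary4p7:
  fixes \<Phi> :: "'a::euclidean_space set" and alpha :: "'i::finite \<Rightarrow> 'a"
    and lam \<eta> :: 'a and i :: 'i
  assumes "root_system \<Phi>" and "irreducible_rs \<Phi>" and "is_base \<Phi> alpha"
    and "dominant_integral alpha lam"
    and "\<eta> \<in> coord_weights \<Phi> alpha lam i"
    and "\<forall>\<mu>\<in>coord_weights \<Phi> alpha lam i. weight_le alpha \<eta> \<mu>"
  shows "is_facet (coord_face \<Phi> alpha lam i) (weight_polytope \<Phi> lam) \<longleftrightarrow>
         (\<forall>j. j \<noteq> i \<longrightarrow> inner \<eta> (omt alpha j) \<noteq> inner lam (omt alpha j))"
proof -
  interpret rsys \<Phi> alpha using assms(1,3) by unfold_locales
  show ?thesis using facet_imp[OF assms(5,6)] imp_facet[OF assms(4,5)] by blast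
qed


end
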